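(* Let $A\in M_n$ and $c\in\mathbb{R}^n$ with $W(A;c)\ne\emptyset$. Let $\theta\in\mathbb{R}$, $h\in\mathbb{R}$ and let $L=\{v\in\mathbb{C}:\mathrm{Re}(e^{i\theta}v)=h\}$ be a supporting line of $W(A;c)$, i.e. $W(A;c)\subseteq\{v:\mathrm{Re}(e^{i\theta}v)\le h\}$ and $L\cap W(A;c)\neq\emptyset$. Suppose either (a) $W(A;c)$ has nonempty interior and $L$ touches $\partial W(A;c)$ at a point where the boundary curve $\partial W(A;c)$ is differentiable; or (b) $c_1\ge c_2\ge\cdots\ge c_n$. Then $h=\sum_{j=1}^n c_j\lambda_j(H_\theta(A))$.
   Context: $M_n$ denotes the space of $n\times n$ complex matrices. For $A\in M_n$ and $\theta\in\mathbb{R}$, put $H_\theta(A)=\frac{1}{2}(e^{i\theta}A+e^{-i\theta}A^* )$, a Hermitian matrix. For a Hermitian $H\in M_n$, $\lambda_1(H)\ge\lambda_2(H)\ge\cdots\ge\lambda_n(H)$ denote its eigenvalues in nonincreasing order, counted with multiplicity. For $c=(c_1,\dots,c_n)^t\in\mathbb{R}^n$ the weighted numerical range of $A$ is $$W(A;c)=\bigcap_{\theta\in[0,2\pi)}\Big\{v\in\mathbb{C}:\ \mathrm{Re}(e^{i\theta}v)\le \sum_{j=1}^n c_j\lambda_j(H_\theta(A))\Big\}.$$ *)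

theory Defs
  imports "HOL-Analysis.Analysis" "Jordan_Normal_Form.Schur_Decomposition"
begin

definition herm_part :: "real \<Rightarrow> complex mat \<Rightarrow> complex mat" where
  "herm_part \<theta> A = (1/2 :: complex) \<cdot>\<^sub>m
     (exp (\<i> * complex_of_real \<theta>) \<cdot>\<^sub>m A + exp (- (\<i> * complex_of_real \<theta>)) \<cdot>\<^sub>m mat_adjoint A)"

text \<open>Index j (0-based) corresponds to lambda_{j+1}.\<close>
definition herm_eigs :: "complex mat \<Rightarrow> real list" where
  "herm_eigs H = (THE es. length es = dim_row H \<and> sorted_wrt (\<ge>) es \<and>
      char_poly H = (\<Prod>e \<leftarrow> es. [:- complex_of_real e, 1:]))"

text \<open>Weighted numerical range W(A;c) of an n x n matrix; c is indexed 0..n-1.\<close>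
definition wnr :: "complex mat \<Rightarrow> (nat \<Rightarrow> real) \<Rightarrow> complex set" where
  "wnr A c = (\<Inter>\<theta>\<in>{0..<2*pi}. {v. Re (exp (\<i> * complex_of_real \<theta>) * v)
      \<le> (\<Sum>j<dim_row A. c j * herm_eigs (herm_part \<theta> A) ! j)})"

definition boundary_differentiable_at :: "complex set \<Rightarrow> complex \<Rightarrow> bool" where
  "boundary_differentiable_at S p \<longleftrightarrow>
     (\<exists>\<gamma> :: real \<Rightarrow> complex. \<exists>e U d. 0 < e \<and> open U \<and> p \<in> U \<and>
        continuous_on {-e<..<e} \<gamma> \<and> inj_on \<gamma> {-e<..<e} \<and>
        \<gamma> ` {-e<..<e} = frontier S \<inter> U \<and> \<gamma> 0 = p \<and>
        (\<gamma> has_vector_derivative d) (at 0) \<and> d \<noteq> 0)"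

end

theory Submission
  imports Defs "HOL-Combinatorics.Permutations"
begin


definition ip :: "nat \<Rightarrow> (nat \<Rightarrow> complex) \<Rightarrow> (nat \<Rightarrow> complex) \<Rightarrow> complex" where
  "ip n x y = (\<Sum>i<n. cnj (x i) * y i)"

definition orthonormal :: "nat \<Rightarrow> nat \<Rightarrow> (nat \<Rightarrow> nat \<Rightarrow> complex) \<Rightarrow> bool" where
  "orthonormal n m u \<longleftrightarrow> (\<forall>i<m. \<forall>j<m. ip n (u i) (u j) = (if i = j then 1 else 0))"

lemma ip_cnj: "cnj (ip n x y) = ip n y x"
  unfolding ip_def by (simp add: mult.commute)

lemma ip_self: "ip n x x = of_real (\<Sum>i<n. (cmod (x i))^2)"
  unfolding ip_def of_real_sum by (intro sum.cong refl) (metis complex_norm_square mult.commute)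

lemma ip_self_Re: "Re (ip n x x) = (\<Sum>i<n. (cmod (x i))^2)"
  by (simp add: ip_self)

lemma ip_self_nonneg: "0 \<le> Re (ip n x x)"
  by (simp add: ip_self_Re sum_nonneg)

lemma ip_sum_right: "finite S \<Longrightarrow> ip n x (\<lambda>i. \<Sum>l\<in>S. a l * y l i) = (\<Sum>l\<in>S. a l * ip n x (y l))"
  unfolding ip_def by (simp add: sum_distrib_left sum_distrib_right mult.assoc mult.left_commute sum.swap[of _ S])

lemma ip_scale_left: "ip n (\<lambda>i. a * x i) y = cnj a * ip n x y"
  unfolding ip_def by (simp add: sum_distrib_left mult.assoc)

lemma ip_scale_right: "ip n x (\<lambda>i. a * y i) = a * ip n x y"
  unfolding ip_def by (simp add: sum_distrib_left mult.assoc mult.left_commute)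

lemma orthonormal_complete:
  assumes o: "orthonormal n n w" and i: "i < n" and k: "k < n"
  shows "(\<Sum>l<n. w l i * cnj (w l k)) = (if i = k then 1 else 0)"
proof -
  define U where "U = mat n n (\<lambda>(i,l). w l i)"
  define U' where "U' = mat n n (\<lambda>(l,i). cnj (w l i))"
  have U: "U \<in> carrier_mat n n" and U': "U' \<in> carrier_mat n n" unfolding U_def U'_def by auto
  have "U' * U = 1\<^sub>m n"
  proof (rule eq_matI)
    fix a b assume a: "a < dim_row (1\<^sub>m n :: complex mat)" and b: "b < dim_col (1\<^sub>m n :: complex mat)"
    have "(U' * U) $$ (a,b) = (\<Sum>i<n. cnj (w a i) * w b i)"
      using a b unfolding U_def U'_def by (simp add: scalar_prod_def lessThan_atLeast0)
    also have "\<dots> = ip n (w a) (w b)" unfolding ip_def ..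
    also have "\<dots> = 1\<^sub>m n $$ (a,b)" using o a b unfolding orthonormal_def by auto
    finally show "(U' * U) $$ (a,b) = 1\<^sub>m n $$ (a,b)" .
  qed (insert U U', auto)
  from mat_mult_left_right_inverse[OF U' U this] have UU: "U * U' = 1\<^sub>m n" .
  have "(U * U') $$ (i,k) = (\<Sum>l<n. w l i * cnj (w l k))"
    using i k unfolding U_def U'_def by (simp add: scalar_prod_def lessThan_atLeast0)
  then show ?thesis using UU i k by simp
qed

lemma orthonormal_complete':
  assumes o: "orthonormal n n w" and i: "i < n" and k: "k < n"
  shows "(\<Sum>l<n. cnj (w l i) * w l k) = (if i = k then 1 else 0)"
proof -
  have "(\<Sum>l<n. cnj (w l i) * w l k) = cnj (\<Sum>l<n. w l i * cnj (w l k))" by simp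
  also have "\<dots> = (if i = k then 1 else 0)" using orthonormal_complete[OF o i k] by simp
  finally show ?thesis .
qed

lemma sum_swap3: "(\<Sum>l\<in>A. \<Sum>k\<in>B. \<Sum>i\<in>C. F l k i) = (\<Sum>k\<in>B. \<Sum>i\<in>C. \<Sum>l\<in>A. F l k i)"
proof -
  have "(\<Sum>l\<in>A. \<Sum>k\<in>B. \<Sum>i\<in>C. F l k i) = (\<Sum>k\<in>B. \<Sum>l\<in>A. \<Sum>i\<in>C. F l k i)"
    by (rule sum.swap)
  also have "\<dots> = (\<Sum>k\<in>B. \<Sum>i\<in>C. \<Sum>l\<in>A. F l k i)"
    by (rule sum.cong[OF refl], rule sum.swap)
  finally show ?thesis .
qed

lemma orthonormal_expand:
  assumes o: "orthonormal n n w" and i: "i < n"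
  shows "(\<Sum>l<n. ip n (w l) y * w l i) = y i"
proof -
  have "(\<Sum>l<n. ip n (w l) y * w l i) = (\<Sum>l<n. \<Sum>k<n. cnj (w l k) * y k * w l i)"
    unfolding ip_def by (simp add: sum_distrib_right)
  also have "\<dots> = (\<Sum>l<n. \<Sum>k<n. y k * (w l i * cnj (w l k)))"
    by (simp add: mult_ac)
  also have "\<dots> = (\<Sum>k<n. \<Sum>l<n. y k * (w l i * cnj (w l k)))"
    by (rule sum.swap)
  also have "\<dots> = (\<Sum>k<n. y k * (\<Sum>l<n. w l i * cnj (w l k)))"
    by (simp add: sum_distrib_left)
  also have "\<dots> = (\<Sum>k<n. y k * (if i = k then 1 else 0))"
    using orthonormal_complete[OF o i] by simp
  also have "\<dots> = y i" using i by (simp add: if_distrib cong: if_cong)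
  finally show ?thesis .
qed

lemma parseval:
  assumes o: "orthonormal n n w"
  shows "(\<Sum>l<n. cnj (ip n (w l) y) * ip n (w l) y) = ip n y y"
proof -
  have "(\<Sum>l<n. cnj (ip n (w l) y) * ip n (w l) y) = (\<Sum>l<n. \<Sum>k<n. \<Sum>i<n. (w l k * cnj (y k)) * (cnj (w l i) * y i))"
    unfolding ip_def by (simp add: sum_product)
  also have "\<dots> = (\<Sum>k<n. \<Sum>i<n. \<Sum>l<n. cnj (y k) * y i * (w l k * cnj (w l i)))"
    by (subst sum_swap3) (simp add: mult_ac)
  also have "\<dots> = (\<Sum>k<n. \<Sum>i<n. cnj (y k) * y i * (if k = i then 1 else 0))"
    by (simp add: sum_distrib_left[symmetric] orthonormal_complete[OF o])
  also have "\<dots> = ip n y y" unfolding ip_def by (simp add: if_distrib cong: if_cong)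
  finally show ?thesis .
qed


lemma ip_diff_right: "ip n x (\<lambda>j. f j - g j) = ip n x f - ip n x g"
  unfolding ip_def by (simp add: algebra_simps sum_subtractf)

lemma ip_delta_right: "k < n \<Longrightarrow> ip n x (\<lambda>j. if j = k then 1 else 0) = cnj (x k)"
  unfolding ip_def by (simp add: if_distrib cong: if_cong)

lemma ip_self_zero: "ip n x x = 0 \<Longrightarrow> j < n \<Longrightarrow> x j = 0"
proof -
  assume "ip n x x = 0" "j < n"
  then have "(\<Sum>i<n. (cmod (x i))^2) = 0" using ip_self_Re[of n x] by simp
  then have "\<forall>i\<in>{..<n}. (cmod (x i))^2 = 0" by (subst sum_nonneg_eq_0_iff[symmetric]) auto
  then show "x j = 0" using \<open>j < n\<close> by auto
qed

lemma normalize_vec: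
  assumes "ip n x x \<noteq> 0"
  shows "ip n (\<lambda>j. x j / of_real (sqrt (Re (ip n x x)))) (\<lambda>j. x j / of_real (sqrt (Re (ip n x x)))) = 1"
proof -
  define r where "r = Re (ip n x x)"
  have ipx: "ip n x x = of_real r" unfolding r_def using ip_self[of n x] by simp
  have "r \<noteq> 0" using assms ipx by auto
  then have r0: "r > 0" using ip_self_nonneg[of n x] unfolding r_def by linarith
  have "ip n (\<lambda>j. x j / of_real (sqrt r)) (\<lambda>j. x j / of_real (sqrt r))
        = ip n (\<lambda>j. (1 / of_real (sqrt r)) * x j) (\<lambda>j. (1 / of_real (sqrt r)) * x j)" by simp
  also have "\<dots> = cnj (1 / of_real (sqrt r)) * ((1 / of_real (sqrt r)) * ip n x x)"
    by (simp only: ip_scale_left ip_scale_right)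
  also have "\<dots> = 1"
  proof -
    have ss: "complex_of_real (sqrt r) * complex_of_real (sqrt r) = complex_of_real r"
      using r0 by (simp flip: of_real_mult)
    have nz: "complex_of_real (sqrt r) \<noteq> 0" using r0 by simp
    have "cnj (1 / complex_of_real (sqrt r)) = 1 / complex_of_real (sqrt r)" by simp
    then have "cnj (1 / of_real (sqrt r)) * ((1 / of_real (sqrt r)) * ip n x x)
        = complex_of_real r / (complex_of_real (sqrt r) * complex_of_real (sqrt r))"
      unfolding ipx by simp
    also have "\<dots> = 1" unfolding ss using r0 by simp
    finally show ?thesis .
  qed
  finally show ?thesis unfolding r_def .
qed

lemma gram_step:
  assumes o: "orthonormal n m u" and mn: "m < n"
  shows "\<exists>w. ip n w w = 1 \<and> (\<forall>i<m. ip n (u i) w = 0)"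
proof -
  define x where "x k = (\<lambda>j. (if j = k then 1 else 0) - (\<Sum>i<m. cnj (u i k) * u i j))" for k
  have orth: "ip n (u i') (x k) = 0" if "i' < m" "k < n" for i' k
  proof -
    have "ip n (u i') (x k) = cnj (u i' k) - (\<Sum>i<m. cnj (u i k) * ip n (u i') (u i))"
      unfolding x_def ip_diff_right ip_delta_right[OF that(2)] by (simp add: ip_sum_right)
    also have "\<dots> = cnj (u i' k) - (\<Sum>i<m. cnj (u i k) * (if i' = i then 1 else 0))"
      using o that(1) unfolding orthonormal_def by (intro arg_cong2[where f=minus] refl sum.cong) auto
    also have "\<dots> = 0" using that(1) by (simp add: if_distrib cong: if_cong)
    finally show ?thesis .
  qed
  show ?thesis
  proof (cases "\<exists>k<n. ip n (x k) (x k) \<noteq> 0")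
    case True
    then obtain k where k: "k < n" "ip n (x k) (x k) \<noteq> 0" by auto
    define s where "s = (1 / of_real (sqrt (Re (ip n (x k) (x k)))) :: complex)"
    have "ip n (\<lambda>j. x k j / of_real (sqrt (Re (ip n (x k) (x k))))) (\<lambda>j. x k j / of_real (sqrt (Re (ip n (x k) (x k))))) = 1"
      by (rule normalize_vec[OF k(2)])
    moreover have "ip n (u i) (\<lambda>j. x k j / of_real (sqrt (Re (ip n (x k) (x k))))) = 0" if "i < m" for i
    proof -
      have "ip n (u i) (\<lambda>j. x k j / of_real (sqrt (Re (ip n (x k) (x k))))) = ip n (u i) (\<lambda>j. s * x k j)"
        unfolding s_def by simp
      also have "\<dots> = 0" unfolding ip_scale_right orth[OF that k(1)] by simp
      finally show ?thesis .
    qed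
    ultimately show ?thesis by blast
  next
    case False
    then have z: "x k j = 0" if "k < n" "j < n" for k j using ip_self_zero that by blast
    have "(\<Sum>k<n. (1::complex)) = (\<Sum>k<n. \<Sum>i<m. cnj (u i k) * u i k)"
    proof (rule sum.cong[OF refl])
      fix k assume "k \<in> {..<n}"
      then have "x k k = 0" using z by auto
      then show "1 = (\<Sum>i<m. cnj (u i k) * u i k)" unfolding x_def by simp
    qed
    also have "\<dots> = (\<Sum>i<m. ip n (u i) (u i))" unfolding ip_def by (rule sum.swap)
    also have "\<dots> = (\<Sum>i<m. (1::complex))" using o unfolding orthonormal_def by simp
    finally have "of_nat n = (of_nat m :: complex)" by simp
    then show ?thesis using mn by simp
  qed
qed

lemma orthonormal_extend:
  assumes "orthonormal n m u" "m \<le> n"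
  shows "\<exists>w. orthonormal n n w \<and> (\<forall>i<m. w i = u i)"
  using assms
proof (induction "n - m" arbitrary: m u)
  case 0
  then have "m = n" by simp
  then show ?case using 0 by blast
next
  case (Suc d)
  then have mn: "m < n" by simp
  from gram_step[OF Suc.prems(1) mn] obtain w where w: "ip n w w = 1" "\<forall>i<m. ip n (u i) w = 0" by blast
  define u' where "u' = u(m := w)"
  have "orthonormal n (Suc m) u'"
    unfolding orthonormal_def
  proof (intro allI impI)
    fix i j assume i: "i < Suc m" and j: "j < Suc m"
    show "ip n (u' i) (u' j) = (if i = j then 1 else 0)"
    proof (cases "i = m"; cases "j = m")
      assume "i = m" "j = m" then show ?thesis using w unfolding u'_def by simp
    next
      assume "i = m" "j \<noteq> m" then show ?thesis using w j ip_cnj[of n "u j" w] unfolding u'_def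
        by simp
    next
      assume "i \<noteq> m" "j = m" then show ?thesis using w i unfolding u'_def by simp
    next
      assume "i \<noteq> m" "j \<noteq> m" then show ?thesis using Suc.prems(1) i j unfolding u'_def orthonormal_def by simp
    qed
  qed
  moreover have "d = n - Suc m" using Suc.hyps(2) by arith
  ultimately obtain w' where "orthonormal n n w'" "\<forall>i<Suc m. w' i = u' i"
    using Suc.hyps(1)[of "Suc m" u'] mn by fastforce
  then show ?case unfolding u'_def by (metis fun_upd_other less_SucI less_irrefl)
qed


definition mv :: "nat \<Rightarrow> complex mat \<Rightarrow> (nat \<Rightarrow> complex) \<Rightarrow> nat \<Rightarrow> complex" where
  "mv n H x i = (\<Sum>k<n. H $$ (i,k) * x k)"

definition hermitian :: "nat \<Rightarrow> complex mat \<Rightarrow> bool" where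
  "hermitian n H \<longleftrightarrow> (\<forall>i<n. \<forall>k<n. H $$ (k,i) = cnj (H $$ (i,k)))"

lemma ip_cong: "(\<And>j. j < n \<Longrightarrow> x j = x' j) \<Longrightarrow> (\<And>j. j < n \<Longrightarrow> y j = y' j) \<Longrightarrow> ip n x y = ip n x' y'"
  unfolding ip_def by (intro sum.cong) auto

lemma ip_mv_herm: assumes "hermitian n H" shows "ip n x (mv n H y) = ip n (mv n H x) y"
proof -
  have "ip n x (mv n H y) = (\<Sum>i<n. \<Sum>k<n. cnj (x i) * H $$ (i,k) * y k)"
    unfolding ip_def mv_def by (simp add: sum_distrib_left mult.assoc)
  also have "\<dots> = (\<Sum>k<n. \<Sum>i<n. cnj (x i) * H $$ (i,k) * y k)" by (rule sum.swap)
  also have "\<dots> = (\<Sum>k<n. \<Sum>i<n. cnj (H $$ (k,i)) * cnj (x i) * y k)"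
  proof (intro sum.cong refl)
    fix k i assume "k \<in> {..<n}" "i \<in> {..<n}"
    then have "cnj (H $$ (k,i)) = H $$ (i,k)" using assms unfolding hermitian_def
      by (metis complex_cnj_cnj lessThan_iff)
    then show "cnj (x i) * H $$ (i,k) * y k = cnj (H $$ (k,i)) * cnj (x i) * y k" by simp
  qed
  also have "\<dots> = ip n (mv n H x) y"
    unfolding ip_def mv_def by (simp add: sum_distrib_right)
  finally show ?thesis .
qed

lemma mv_sum: "finite S \<Longrightarrow> mv n H (\<lambda>j. \<Sum>b\<in>S. a b * y b j) i = (\<Sum>b\<in>S. a b * mv n H (y b) i)"
  unfolding mv_def by (simp add: sum_distrib_left mult_ac sum.swap[of _ S])

lemma mv_scale: "mv n H (\<lambda>j. a * x j) i = a * mv n H x i"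
  unfolding mv_def by (simp add: sum_distrib_left mult_ac)

lemma sum_split_shift:
  assumes "m \<le> (n::nat)"
  shows "(\<Sum>a<n. f a) = (\<Sum>a<m. f a) + (\<Sum>a<n-m. f (m+a))"
proof -
  have "{..<n} = {..<m} \<union> {m..<n}" using assms by auto
  then have "(\<Sum>a<n. f a) = (\<Sum>a\<in>{..<m} \<union> {m..<n}. f a)" by simp
  also have "\<dots> = (\<Sum>a<m. f a) + (\<Sum>a\<in>{m..<n}. f a)"
    by (rule sum.union_disjoint) auto
  also have "(\<Sum>a\<in>{m..<n}. f a) = (\<Sum>a<n-m. f (m+a))"
    by (rule sum.reindex_bij_witness[of _ "\<lambda>a. m + a" "\<lambda>a. a - m"]) (use assms in auto)
  finally show ?thesis .
qed

lemma orthonormal_snoc: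
  assumes o: "orthonormal n m u" and w: "ip n w w = 1" "\<forall>i<m. ip n (u i) w = 0"
  shows "orthonormal n (Suc m) (u(m := w))"
  unfolding orthonormal_def
proof (intro allI impI)
  fix i j assume i: "i < Suc m" and j: "j < Suc m"
  show "ip n ((u(m := w)) i) ((u(m := w)) j) = (if i = j then 1 else 0)"
  proof (cases "i = m"; cases "j = m")
    assume "i = m" "j = m" then show ?thesis using w by simp
  next
    assume "i = m" "j \<noteq> m" then show ?thesis using w j ip_cnj[of n "u j" w] by simp
  next
    assume "i \<noteq> m" "j = m" then show ?thesis using w i by simp
  next
    assume "i \<noteq> m" "j \<noteq> m" then show ?thesis using o i j unfolding orthonormal_def by simp
  qed
qed

lemma eigen_ext:
  assumes H: "H \<in> carrier_mat n n" and herm: "hermitian n H"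
    and o: "orthonormal n m u" and ev: "\<forall>l<m. \<forall>i<n. mv n H (u l) i = \<mu> l * u l i" and mn: "m < n"
  shows "\<exists>y e. ip n y y \<noteq> 0 \<and> (\<forall>i<m. ip n (u i) y = 0) \<and> (\<forall>i<n. mv n H y i = e * y i)"
proof -
  obtain w where w: "orthonormal n n w" "\<forall>i<m. w i = u i" using orthonormal_extend[OF o] mn by fastforce
  define r where "r = n - m"
  have r0: "r > 0" using mn r_def by simp
  define K where "K = mat r r (\<lambda>(a,b). ip n (w (m+a)) (mv n H (w (m+b))))"
  have K: "K \<in> carrier_mat r r" unfolding K_def by simp
  obtain as where as: "char_poly K = (\<Prod>a\<leftarrow>as. [:- a, 1:])" "length as = r"
    using char_poly_factorized[OF K] by blast
  then obtain e as' where eas: "as = e # as'" using r0 by (cases as) auto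
  have "poly (char_poly K) e = 0" unfolding as(1) eas by simp
  then have "eigenvalue K e" using eigenvalue_root_char_poly[OF K] by simp
  then obtain z where z: "z \<in> carrier_vec r" "z \<noteq> 0\<^sub>v r" "K *\<^sub>v z = e \<cdot>\<^sub>v z"
    unfolding eigenvalue_def eigenvector_def using K by auto
  define y where "y = (\<lambda>j. \<Sum>b<r. z $ b * w (m+b) j)"
  have ipwy: "ip n (w a) y = (if m \<le> a then z $ (a - m) else 0)" if "a < n" for a
  proof -
    have "ip n (w a) y = (\<Sum>b<r. z $ b * ip n (w a) (w (m+b)))" unfolding y_def by (simp add: ip_sum_right)
    also have "\<dots> = (\<Sum>b<r. z $ b * (if a = m + b then 1 else 0))"
      using w(1) that unfolding orthonormal_def r_def by (intro sum.cong refl) auto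
    also have "\<dots> = (if m \<le> a then z $ (a - m) else 0)"
    proof (cases "m \<le> a")
      case True
      then have e: "\<And>b. (a = m + b) = (b = a - m)" by arith
      have "a - m < r" using True that r_def by simp
      then show ?thesis using True unfolding e by (simp add: if_distrib cong: if_cong)
    next
      case False
      then show ?thesis by simp
    qed
    finally show ?thesis .
  qed
  have Hw: "mv n H (w (m+b)) i = (\<Sum>a<r. K $$ (a,b) * w (m+a) i)" if b: "b < r" and i: "i < n" for b i
  proof -
    have "mv n H (w (m+b)) i = (\<Sum>a<n. ip n (w a) (mv n H (w (m+b))) * w a i)"
      using orthonormal_expand[OF w(1) i] by simp
    also have "\<dots> = (\<Sum>a<m. ip n (w a) (mv n H (w (m+b))) * w a i) + (\<Sum>a<r. ip n (w (m+a)) (mv n H (w (m+b))) * w (m+a) i)"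
      unfolding r_def by (rule sum_split_shift) (use mn in simp)
    also have "(\<Sum>a<m. ip n (w a) (mv n H (w (m+b))) * w a i) = 0"
    proof (rule sum.neutral, intro ballI)
      fix a assume a: "a \<in> {..<m}"
      have "ip n (w a) (mv n H (w (m+b))) = ip n (mv n H (w a)) (w (m+b))" by (rule ip_mv_herm[OF herm])
      also have "\<dots> = ip n (\<lambda>j. \<mu> a * w a j) (w (m+b))"
        using ev w(2) a by (intro ip_cong) auto
      also have "\<dots> = cnj (\<mu> a) * ip n (w a) (w (m+b))" by (rule ip_scale_left)
      also have "\<dots> = 0" using w(1) a b unfolding orthonormal_def r_def by auto
      finally show "ip n (w a) (mv n H (w (m+b))) * w a i = 0" by simp
    qed
    also have "(\<Sum>a<r. ip n (w (m+a)) (mv n H (w (m+b))) * w (m+a) i) = (\<Sum>a<r. K $$ (a,b) * w (m+a) i)"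
      unfolding K_def using b by (intro sum.cong refl) auto
    finally show ?thesis by simp
  qed
  have Kz: "(\<Sum>b<r. K $$ (a,b) * z $ b) = e * z $ a" if "a < r" for a
  proof -
    have "(K *\<^sub>v z) $ a = (\<Sum>b<r. K $$ (a,b) * z $ b)"
      using K z(1) that by (simp add: scalar_prod_def lessThan_atLeast0)
    then show ?thesis using z(3) z(1) that by simp
  qed
  have Hy: "mv n H y i = e * y i" if i: "i < n" for i
  proof -
    have "mv n H y i = (\<Sum>b<r. z $ b * mv n H (w (m+b)) i)" unfolding y_def by (simp add: mv_sum)
    also have "\<dots> = (\<Sum>b<r. \<Sum>a<r. z $ b * K $$ (a,b) * w (m+a) i)"
      using Hw i by (simp add: sum_distrib_left mult.assoc)
    also have "\<dots> = (\<Sum>a<r. \<Sum>b<r. z $ b * K $$ (a,b) * w (m+a) i)"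
      by (rule sum.swap)
    also have "\<dots> = (\<Sum>a<r. (\<Sum>b<r. K $$ (a,b) * z $ b) * w (m+a) i)"
      by (intro sum.cong refl) (simp add: sum_distrib_right sum_distrib_left mult_ac)
    also have "\<dots> = (\<Sum>a<r. e * z $ a * w (m+a) i)" using Kz by simp
    also have "\<dots> = e * y i" unfolding y_def by (simp add: sum_distrib_left mult.assoc)
    finally show ?thesis .
  qed
  have ny: "ip n y y \<noteq> 0"
  proof
    assume "ip n y y = 0"
    then have y0: "y j = 0" if "j < n" for j using ip_self_zero that by blast
    have "z $ b = 0" if "b < r" for b
    proof -
      have "ip n (w (m+b)) y = 0" unfolding ip_def using y0 by simp
      then show ?thesis using ipwy[of "m+b"] that r_def by simp
    qed
    then have "z = 0\<^sub>v r" using z(1) by (intro eq_vecI) auto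
    then show False using z(2) by simp
  qed
  have "\<forall>i<m. ip n (u i) y = 0"
  proof (intro allI impI)
    fix i assume i: "i < m"
    then have wi: "w i = u i" using w(2) by simp
    have "ip n (w i) y = 0" using ipwy[of i] i mn by simp
    then show "ip n (u i) y = 0" using wi by simp
  qed
  then show ?thesis using ny Hy by blast
qed


definition spectral :: "nat \<Rightarrow> complex mat \<Rightarrow> (nat \<Rightarrow> nat \<Rightarrow> complex) \<Rightarrow> (nat \<Rightarrow> real) \<Rightarrow> bool" where
  "spectral n H u \<mu> \<longleftrightarrow> orthonormal n n u \<and> (\<forall>l<n. \<forall>i<n. mv n H (u l) i = of_real (\<mu> l) * u l i)
     \<and> (\<forall>i j. i \<le> j \<and> j < n \<longrightarrow> \<mu> j \<le> \<mu> i)"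

lemma spectral_partial:
  assumes H: "H \<in> carrier_mat n n" and herm: "hermitian n H"
  shows "m \<le> n \<Longrightarrow> \<exists>u \<mu>. orthonormal n m u \<and> (\<forall>l<m. \<forall>i<n. mv n H (u l) i = of_real (\<mu> l) * u l i)"
proof (induction m)
  case 0 then show ?case unfolding orthonormal_def by auto
next
  case (Suc m)
  then obtain u \<mu> where o: "orthonormal n m u" and ev: "\<forall>l<m. \<forall>i<n. mv n H (u l) i = of_real (\<mu> l) * u l i" by auto
  have mn: "m < n" using Suc.prems by simp
  from eigen_ext[OF H herm o, of "\<lambda>l. of_real (\<mu> l)"] ev mn obtain y e where
    y: "ip n y y \<noteq> 0" "\<forall>i<m. ip n (u i) y = 0" "\<forall>i<n. mv n H y i = e * y i" by blast
  define s where "s = 1 / complex_of_real (sqrt (Re (ip n y y)))"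
  define y' where "y' = (\<lambda>j. s * y j)"
  have y'1: "ip n y' y' = 1" using normalize_vec[OF y(1)] unfolding y'_def s_def by simp
  have y'o: "\<forall>i<m. ip n (u i) y' = 0" using y(2) unfolding y'_def by (simp add: ip_scale_right)
  have y'e: "\<forall>i<n. mv n H y' i = e * y' i" using y(3) unfolding y'_def by (simp add: mv_scale)
  have 1: "ip n y' (mv n H y') = e"
  proof -
    have "ip n y' (mv n H y') = ip n y' (\<lambda>j. e * y' j)" using y'e by (intro ip_cong) auto
    then show ?thesis using y'1 by (simp add: ip_scale_right)
  qed
  have 2: "ip n y' (mv n H y') = cnj e"
  proof -
    have "ip n y' (mv n H y') = ip n (mv n H y') y'" by (rule ip_mv_herm[OF herm])
    also have "\<dots> = ip n (\<lambda>j. e * y' j) y'" using y'e by (intro ip_cong) auto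
    finally show ?thesis using y'1 by (simp add: ip_scale_left)
  qed
  from 1 2 have "cnj e = e" by simp
  then have er: "e = of_real (Re e)" by (simp add: complex_eq_iff)
  have "orthonormal n (Suc m) (u(m := y'))" by (rule orthonormal_snoc[OF o y'1 y'o])
  moreover have "\<forall>l<Suc m. \<forall>i<n. mv n H ((u(m := y')) l) i = of_real ((\<mu>(m := Re e)) l) * (u(m := y')) l i"
  proof (intro allI impI)
    fix l i assume l: "l < Suc m" and i: "i < n"
    show "mv n H ((u(m := y')) l) i = of_real ((\<mu>(m := Re e)) l) * (u(m := y')) l i"
    proof (cases "l = m")
      case True then show ?thesis using y'e i er by (metis fun_upd_same)
    next
      case False then show ?thesis using ev l i by simp
    qed
  qed
  ultimately show ?case by blast
qed

lemma spectral_exists: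
  assumes H: "H \<in> carrier_mat n n" and herm: "hermitian n H"
  shows "\<exists>u \<mu>. spectral n H u \<mu>"
proof -
  obtain u \<mu> where o: "orthonormal n n u" and ev: "\<forall>l<n. \<forall>i<n. mv n H (u l) i = of_real (\<mu> l) * u l i"
    using spectral_partial[OF H herm, of n] by auto
  define xs where "xs = map \<mu> [0..<n]"
  define ys where "ys = rev (sort xs)"
  have "mset ys = mset xs" unfolding ys_def by simp
  then obtain p where p: "p permutes {..<length xs}" "permute_list p xs = ys"
    by (metis mset_eq_permutation)
  have lx: "length xs = n" unfolding xs_def by simp
  have pin: "p i < n" if "i < n" for i using permutes_in_image[OF p(1)] that lx by simp
  have pinj: "p i = p j \<longleftrightarrow> i = j" for i j using permutes_inj[OF p(1)] by (meson injD)
  have ysn: "ys ! i = \<mu> (p i)" if "i < n" for i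
    using permute_list_nth[OF p(1)] p(2) that lx pin unfolding xs_def by auto
  have sy: "sorted_wrt (\<ge>) ys" unfolding ys_def by (simp add: sorted_wrt_rev)
  have ly: "length ys = n" using lx unfolding ys_def by simp
  have "spectral n H (\<lambda>l. u (p l)) (\<lambda>l. \<mu> (p l))"
    unfolding spectral_def
  proof (intro conjI allI impI)
    show "orthonormal n n (\<lambda>l. u (p l))" using o pin pinj unfolding orthonormal_def by simp
  next
    fix l i assume "l < n" "i < n" then show "mv n H (u (p l)) i = of_real (\<mu> (p l)) * u (p l) i"
      using ev pin by simp
  next
    fix i j assume "i \<le> j \<and> j < n"
    then show "\<mu> (p j) \<le> \<mu> (p i)"
    proof (cases "i = j")
      case False
      with \<open>i \<le> j \<and> j < n\<close> have "i < j" "j < n" by auto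
      then have "ys ! j \<le> ys ! i" using sy ly by (simp add: sorted_wrt_iff_nth_less)
      then show ?thesis using ysn \<open>i < j\<close> \<open>j < n\<close> by simp
    qed simp
  qed
  then show ?thesis by blast
qed

lemma mat_mult_entry: "A \<in> carrier_mat n n \<Longrightarrow> B \<in> carrier_mat n n \<Longrightarrow> i < n \<Longrightarrow> k < n \<Longrightarrow>
  (A * B) $$ (i,k) = (\<Sum>j<n. A $$ (i,j) * B $$ (j,k))"
  by (simp add: scalar_prod_def lessThan_atLeast0)

lemma spectral_expansion:
  assumes H: "H \<in> carrier_mat n n" and sp: "spectral n H u \<mu>" and i: "i < n" and k: "k < n"
  shows "H $$ (i,k) = (\<Sum>l<n. of_real (\<mu> l) * u l i * cnj (u l k))"
proof -
  have o: "orthonormal n n u" and ev: "\<forall>l<n. \<forall>i<n. mv n H (u l) i = of_real (\<mu> l) * u l i"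
    using sp unfolding spectral_def by auto
  have "H $$ (i,k) = (\<Sum>j<n. H $$ (i,j) * (if j = k then 1 else 0))" using k by (simp add: if_distrib cong: if_cong)
  also have "\<dots> = (\<Sum>j<n. H $$ (i,j) * (\<Sum>l<n. u l j * cnj (u l k)))"
    using orthonormal_complete[OF o _ k] by simp
  also have "\<dots> = (\<Sum>j<n. \<Sum>l<n. H $$ (i,j) * u l j * cnj (u l k))" by (simp add: sum_distrib_left mult.assoc)
  also have "\<dots> = (\<Sum>l<n. \<Sum>j<n. H $$ (i,j) * u l j * cnj (u l k))" by (rule sum.swap)
  also have "\<dots> = (\<Sum>l<n. mv n H (u l) i * cnj (u l k))" unfolding mv_def by (simp add: sum_distrib_right)
  also have "\<dots> = (\<Sum>l<n. of_real (\<mu> l) * u l i * cnj (u l k))" using ev i by simp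
  finally show ?thesis .
qed

lemma spectral_char_poly:
  assumes H: "H \<in> carrier_mat n n" and sp: "spectral n H u \<mu>"
  shows "char_poly H = (\<Prod>e\<leftarrow>map \<mu> [0..<n]. [:- complex_of_real e, 1:])"
proof -
  have o: "orthonormal n n u" using sp unfolding spectral_def by auto
  define P where "P = mat n n (\<lambda>(i,l). u l i)"
  define Q where "Q = mat n n (\<lambda>(l,i). cnj (u l i))"
  define D where "D = mat n n (\<lambda>(i,j). if i = j then complex_of_real (\<mu> i) else 0)"
  have P: "P \<in> carrier_mat n n" and Q: "Q \<in> carrier_mat n n" and D: "D \<in> carrier_mat n n"
    unfolding P_def Q_def D_def by auto
  have PQ: "P * Q = 1\<^sub>m n"
  proof (rule eq_matI)
    fix i k assume "i < dim_row (1\<^sub>m n :: complex mat)" "k < dim_col (1\<^sub>m n :: complex mat)"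
    then have ik: "i < n" "k < n" by auto
    then have "(P * Q) $$ (i,k) = (\<Sum>l<n. u l i * cnj (u l k))"
      unfolding mat_mult_entry[OF P Q ik] unfolding P_def Q_def by simp
    then show "(P * Q) $$ (i,k) = 1\<^sub>m n $$ (i,k)" using orthonormal_complete[OF o ik] ik by simp
  qed (use P Q in auto)
  have QP: "Q * P = 1\<^sub>m n"
  proof (rule eq_matI)
    fix i k assume "i < dim_row (1\<^sub>m n :: complex mat)" "k < dim_col (1\<^sub>m n :: complex mat)"
    then have ik: "i < n" "k < n" by auto
    then have "(Q * P) $$ (i,k) = ip n (u i) (u k)"
      unfolding mat_mult_entry[OF Q P ik] unfolding P_def Q_def ip_def by simp
    then show "(Q * P) $$ (i,k) = 1\<^sub>m n $$ (i,k)" using o ik unfolding orthonormal_def by simp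
  qed (use P Q in auto)
  have PD: "P * D \<in> carrier_mat n n" using P D by simp
  have HPDQ: "H = P * D * Q"
  proof (rule eq_matI)
    fix i k assume "i < dim_row (P * D * Q)" "k < dim_col (P * D * Q)"
    then have ik: "i < n" "k < n" using P Q D by auto
    have pd: "(P * D) $$ (i,l) = u l i * complex_of_real (\<mu> l)" if "l < n" for l
    proof -
      have "(P * D) $$ (i,l) = (\<Sum>j<n. u j i * (if j = l then complex_of_real (\<mu> j) else 0))"
        unfolding mat_mult_entry[OF P D ik(1) that] unfolding P_def D_def using ik that by simp
      also have "\<dots> = u l i * complex_of_real (\<mu> l)" using that by (simp add: if_distrib cong: if_cong)
      finally show ?thesis .
    qed
    have "(P * D * Q) $$ (i,k) = (\<Sum>l<n. u l i * complex_of_real (\<mu> l) * cnj (u l k))"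
      unfolding mat_mult_entry[OF PD Q ik] using pd ik unfolding Q_def by simp
    also have "\<dots> = H $$ (i,k)" using spectral_expansion[OF H sp ik] by (simp add: mult_ac)
    finally show "H $$ (i,k) = (P * D * Q) $$ (i,k)" by simp
  qed (use H P Q D in auto)
  have "similar_mat_wit H D P Q" unfolding similar_mat_wit_def Let_def using H P Q D PQ QP HPDQ by auto
  then have "char_poly H = char_poly D" by (intro char_poly_similar) (auto simp: similar_mat_def)
  also have "upper_triangular D" unfolding upper_triangular_def D_def by auto
  then have "char_poly D = (\<Prod>a\<leftarrow>diag_mat D. [:- a, 1:])" by (rule char_poly_upper_triangular[OF D])
  also have "diag_mat D = map (\<lambda>i. complex_of_real (\<mu> i)) [0..<n]"
    unfolding diag_mat_def D_def by simp
  finally show ?thesis by (simp add: o_def)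
qed

lemma poly_prod_lin_zero: "poly (\<Prod>e\<leftarrow>xs. [:- complex_of_real e, 1:]) z = 0 \<longleftrightarrow> z \<in> complex_of_real ` set xs"
  by (induction xs) auto

lemma prod_lin_unique:
  "sorted_wrt (\<ge>) xs \<Longrightarrow> sorted_wrt (\<ge>) ys \<Longrightarrow>
   (\<Prod>e\<leftarrow>xs. [:- complex_of_real e, 1:]) = (\<Prod>e\<leftarrow>ys. [:- complex_of_real e, 1:]) \<Longrightarrow> xs = ys"
proof (induction xs arbitrary: ys)
  case Nil
  show ?case
  proof (cases ys)
    case (Cons y ys')
    have "poly (\<Prod>e\<leftarrow>ys. [:- complex_of_real e, 1:]) (of_real y) = 0"
      unfolding poly_prod_lin_zero using Cons by simp
    then show ?thesis using Nil.prems(3) by simp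
  qed simp
next
  case (Cons x xs)
  have rx: "poly (\<Prod>e\<leftarrow>ys. [:- complex_of_real e, 1:]) (of_real x) = 0"
    unfolding Cons.prems(3)[symmetric] poly_prod_lin_zero by simp
  then obtain y ys' where ys: "ys = y # ys'" by (cases ys) auto
  have ry: "poly (\<Prod>e\<leftarrow>x#xs. [:- complex_of_real e, 1:]) (of_real y) = 0"
    unfolding Cons.prems(3) poly_prod_lin_zero ys by simp
  from rx have "x \<in> set ys" unfolding poly_prod_lin_zero by auto
  then have "x \<le> y" using Cons.prems(2) unfolding ys by auto
  moreover from ry have "y \<in> set (x#xs)" unfolding poly_prod_lin_zero by auto
  then have "y \<le> x" using Cons.prems(1) by auto
  ultimately have xy: "x = y" by simp
  have nz: "[:- complex_of_real y, 1:] \<noteq> 0" by simp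
  have eq: "[:- complex_of_real y, 1:] * (\<Prod>e\<leftarrow>xs. [:- complex_of_real e, 1:]) = [:- complex_of_real y, 1:] * (\<Prod>e\<leftarrow>ys'. [:- complex_of_real e, 1:])"
    using Cons.prems(3) unfolding ys xy by (simp only: list.map prod_list.Cons)
  have "(\<Prod>e\<leftarrow>xs. [:- complex_of_real e, 1:]) = (\<Prod>e\<leftarrow>ys'. [:- complex_of_real e, 1:])"
    using mult_left_cancel[OF nz] eq by blast
  then have "xs = ys'" using Cons.IH Cons.prems(1,2) unfolding ys by simp
  then show ?case using ys xy by simp
qed

lemma herm_eigs_spectral:
  assumes H: "H \<in> carrier_mat n n" and sp: "spectral n H u \<mu>"
  shows "herm_eigs H = map \<mu> [0..<n]"
proof -
  have s: "sorted_wrt (\<ge>) (map \<mu> [0..<n])"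
    using sp unfolding spectral_def by (auto simp: sorted_wrt_iff_nth_less)
  show ?thesis unfolding herm_eigs_def
  proof (rule the_equality)
    show "length (map \<mu> [0..<n]) = dim_row H \<and> sorted_wrt (\<ge>) (map \<mu> [0..<n]) \<and>
      char_poly H = (\<Prod>e\<leftarrow>map \<mu> [0..<n]. [:- complex_of_real e, 1:])"
      using H s spectral_char_poly[OF H sp] by simp
  next
    fix es assume "length es = dim_row H \<and> sorted_wrt (\<ge>) es \<and> char_poly H = (\<Prod>e\<leftarrow>es. [:- complex_of_real e, 1:])"
    then show "es = map \<mu> [0..<n]" using prod_lin_unique[OF _ s] spectral_char_poly[OF H sp] by auto
  qed
qed

lemma herm_eigs_nth:
  assumes H: "H \<in> carrier_mat n n" and sp: "spectral n H u \<mu>" and j: "j < n"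
  shows "herm_eigs H ! j = \<mu> j"
  using herm_eigs_spectral[OF H sp] j by simp


definition qf :: "nat \<Rightarrow> complex mat \<Rightarrow> (nat \<Rightarrow> complex) \<Rightarrow> complex" where
  "qf n H x = ip n x (mv n H x)"

lemma cnj_mult_self: "cnj z * z = complex_of_real ((cmod z)^2)"
  by (metis complex_norm_square mult.commute)

lemma parseval_real:
  assumes o: "orthonormal n n w"
  shows "(\<Sum>l<n. (cmod (ip n (w l) y))^2) = Re (ip n y y)"
proof -
  have "complex_of_real (\<Sum>l<n. (cmod (ip n (w l) y))^2) = (\<Sum>l<n. cnj (ip n (w l) y) * ip n (w l) y)"
    by (simp add: cnj_mult_self)
  also have "\<dots> = ip n y y" by (rule parseval[OF o])
  finally show ?thesis by (metis Re_complex_of_real)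
qed

lemma qf_spectral:
  assumes H: "H \<in> carrier_mat n n" and sp: "spectral n H u \<mu>"
  shows "qf n H x = complex_of_real (\<Sum>l<n. \<mu> l * (cmod (ip n (u l) x))^2)"
proof -
  have "qf n H x = (\<Sum>i<n. \<Sum>k<n. cnj (x i) * H $$ (i,k) * x k)"
    unfolding qf_def ip_def mv_def by (simp add: sum_distrib_left mult.assoc)
  also have "\<dots> = (\<Sum>i<n. \<Sum>k<n. \<Sum>l<n. of_real (\<mu> l) * ((cnj (x i) * u l i) * (cnj (u l k) * x k)))"
  proof (intro sum.cong refl)
    fix i k assume ik: "i \<in> {..<n}" "k \<in> {..<n}"
    then have "H $$ (i,k) = (\<Sum>l<n. of_real (\<mu> l) * u l i * cnj (u l k))"
      using spectral_expansion[OF H sp] by simp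
    then have "cnj (x i) * H $$ (i,k) * x k = (\<Sum>l<n. cnj (x i) * (of_real (\<mu> l) * u l i * cnj (u l k)) * x k)"
      by (simp only: sum_distrib_left sum_distrib_right)
    also have "\<dots> = (\<Sum>l<n. of_real (\<mu> l) * ((cnj (x i) * u l i) * (cnj (u l k) * x k)))"
      by (intro sum.cong refl) (simp only: mult_ac)
    finally show "cnj (x i) * H $$ (i,k) * x k = (\<Sum>l<n. of_real (\<mu> l) * ((cnj (x i) * u l i) * (cnj (u l k) * x k)))" .
  qed
  also have "\<dots> = (\<Sum>l<n. \<Sum>i<n. \<Sum>k<n. of_real (\<mu> l) * ((cnj (x i) * u l i) * (cnj (u l k) * x k)))"
    by (rule sum_swap3[symmetric])
  also have "\<dots> = (\<Sum>l<n. of_real (\<mu> l) * (cnj (ip n (u l) x) * ip n (u l) x))"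
  proof (intro sum.cong refl)
    fix l
    have a: "cnj (\<Sum>k<n. cnj (u l k) * x k) = (\<Sum>i<n. cnj (x i) * u l i)" by (simp add: mult.commute)
    have b: "ip n (u l) x = (\<Sum>k<n. cnj (u l k) * x k)" unfolding ip_def ..
    show "(\<Sum>i<n. \<Sum>k<n. of_real (\<mu> l) * ((cnj (x i) * u l i) * (cnj (u l k) * x k))) =
       of_real (\<mu> l) * (cnj (ip n (u l) x) * ip n (u l) x)"
      unfolding b a unfolding sum_product unfolding sum_distrib_left ..
  qed
  also have "\<dots> = complex_of_real (\<Sum>l<n. \<mu> l * (cmod (ip n (u l) x))^2)"
    by (simp add: cnj_mult_self)
  finally show ?thesis .
qed

lemma sum_lessThan_restrict:
  assumes "k \<le> (n::nat)"
  shows "(\<Sum>l<n. if l < k then f l else 0) = (\<Sum>l<k. f l)"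
proof -
  have "(\<Sum>l<n. if l < k then f l else 0) = (\<Sum>l\<in>{..<n} \<inter> {l. l < k}. f l)"
    by (simp add: sum.inter_restrict)
  also have "{..<n} \<inter> {l. l < k} = {..<k}" using assms by auto
  finally show ?thesis .
qed

lemma rearr:
  fixes t \<mu> :: "nat \<Rightarrow> real"
  assumes t: "\<forall>l<n. 0 \<le> t l \<and> t l \<le> 1" and st: "(\<Sum>l<n. t l) = real k" and kn: "k \<le> n"
    and mono: "\<forall>i j. i \<le> j \<and> j < n \<longrightarrow> \<mu> j \<le> \<mu> i"
  shows "(\<Sum>l<n. t l * \<mu> l) \<le> (\<Sum>l<k. \<mu> l)"
proof (cases "n = 0")
  case True then show ?thesis using kn by simp
next
  case False
  define m where "m = \<mu> (min k (n - 1))"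
  have m1: "m \<le> \<mu> l" if "l < k" for l
  proof -
    have "l \<le> min k (n - 1)" "min k (n - 1) < n" using that kn False by auto
    then show ?thesis using mono unfolding m_def by blast
  qed
  have m2: "\<mu> l \<le> m" if "k \<le> l" "l < n" for l
  proof -
    have "min k (n - 1) \<le> l" using that by auto
    then show ?thesis using mono that unfolding m_def by blast
  qed
  have trm: "(t l - (if l < k then 1 else 0)) * \<mu> l \<le> (t l - (if l < k then 1 else 0)) * m" if "l < n" for l
  proof (cases "l < k")
    case True
    then have "t l - 1 \<le> 0" using t that by auto
    then show ?thesis using True m1[OF True] by (simp add: mult_left_mono_neg)
  next
    case False
    then show ?thesis using t that m2[of l] by (simp add: mult_left_mono)
  qed
  have "(\<Sum>l<n. t l * \<mu> l) - (\<Sum>l<k. \<mu> l) = (\<Sum>l<n. (t l - (if l < k then 1 else 0)) * \<mu> l)"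
  proof -
    have "(\<Sum>l<n. (t l - (if l < k then 1 else 0)) * \<mu> l) = (\<Sum>l<n. t l * \<mu> l - (if l < k then \<mu> l else 0))"
      by (intro sum.cong refl) (simp add: algebra_simps)
    also have "\<dots> = (\<Sum>l<n. t l * \<mu> l) - (\<Sum>l<n. if l < k then \<mu> l else 0)"
      by (rule sum_subtractf)
    finally show ?thesis using sum_lessThan_restrict[OF kn, of \<mu>] by simp
  qed
  also have "\<dots> \<le> (\<Sum>l<n. (t l - (if l < k then 1 else 0)) * m)"
    by (rule sum_mono) (use trm in auto)
  also have "\<dots> = ((\<Sum>l<n. t l) - (\<Sum>l<n. if l < k then 1 else 0)) * m"
    by (simp add: sum_distrib_right sum_subtractf left_diff_distrib)
  also have "(\<Sum>l<n. if l < k then (1::real) else 0) = real k"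
    using sum_lessThan_restrict[OF kn, of "\<lambda>_. (1::real)"] by simp
  finally show ?thesis using st by simp
qed

lemma kyfan_t:
  assumes H: "H \<in> carrier_mat n n" and sp: "spectral n H u \<mu>" and v: "orthonormal n n v" and kn: "k \<le> n"
  shows "(\<Sum>j<k. Re (qf n H (v j))) = (\<Sum>l<n. (\<Sum>j<k. (cmod (ip n (u l) (v j)))^2) * \<mu> l)"
    and "\<forall>l<n. 0 \<le> (\<Sum>j<k. (cmod (ip n (u l) (v j)))^2) \<and> (\<Sum>j<k. (cmod (ip n (u l) (v j)))^2) \<le> 1"
    and "(\<Sum>l<n. (\<Sum>j<k. (cmod (ip n (u l) (v j)))^2)) = real k"
proof -
  have u: "orthonormal n n u" using sp unfolding spectral_def by auto
  show "(\<Sum>j<k. Re (qf n H (v j))) = (\<Sum>l<n. (\<Sum>j<k. (cmod (ip n (u l) (v j)))^2) * \<mu> l)"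
  proof -
    have "(\<Sum>j<k. Re (qf n H (v j))) = (\<Sum>j<k. \<Sum>l<n. \<mu> l * (cmod (ip n (u l) (v j)))^2)"
      unfolding qf_spectral[OF H sp] by simp
    also have "\<dots> = (\<Sum>l<n. \<Sum>j<k. \<mu> l * (cmod (ip n (u l) (v j)))^2)" by (rule sum.swap)
    also have "\<dots> = (\<Sum>l<n. (\<Sum>j<k. (cmod (ip n (u l) (v j)))^2) * \<mu> l)"
      by (simp add: sum_distrib_left sum_distrib_right mult.commute)
    finally show ?thesis .
  qed
  show "\<forall>l<n. 0 \<le> (\<Sum>j<k. (cmod (ip n (u l) (v j)))^2) \<and> (\<Sum>j<k. (cmod (ip n (u l) (v j)))^2) \<le> 1"
  proof (intro allI impI conjI)
    fix l assume l: "l < n"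
    show "0 \<le> (\<Sum>j<k. (cmod (ip n (u l) (v j)))^2)" by (simp add: sum_nonneg)
    have "(\<Sum>j<k. (cmod (ip n (u l) (v j)))^2) \<le> (\<Sum>j<n. (cmod (ip n (u l) (v j)))^2)"
      by (rule sum_mono2) (use kn in auto)
    also have "\<dots> = (\<Sum>j<n. (cmod (ip n (v j) (u l)))^2)"
      by (intro sum.cong refl) (metis complex_mod_cnj ip_cnj)
    also have "\<dots> = Re (ip n (u l) (u l))" by (rule parseval_real[OF v])
    also have "\<dots> = 1" using u l unfolding orthonormal_def by simp
    finally show "(\<Sum>j<k. (cmod (ip n (u l) (v j)))^2) \<le> 1" .
  qed
  have "(\<Sum>l<n. (\<Sum>j<k. (cmod (ip n (u l) (v j)))^2)) = (\<Sum>j<k. (\<Sum>l<n. (cmod (ip n (u l) (v j)))^2))"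
    by (rule sum.swap)
  also have "\<dots> = (\<Sum>j<k. Re (ip n (v j) (v j)))" by (simp add: parseval_real[OF u])
  also have "\<dots> = (\<Sum>j<k. 1)" using v kn unfolding orthonormal_def by (intro sum.cong refl) auto
  finally show "(\<Sum>l<n. (\<Sum>j<k. (cmod (ip n (u l) (v j)))^2)) = real k" by simp
qed

lemma kyfan:
  assumes H: "H \<in> carrier_mat n n" and sp: "spectral n H u \<mu>" and v: "orthonormal n n v" and kn: "k \<le> n"
  shows "(\<Sum>j<k. Re (qf n H (v j))) \<le> (\<Sum>j<k. \<mu> j)"
  unfolding kyfan_t(1)[OF assms]
  by (rule rearr[OF kyfan_t(2)[OF assms] kyfan_t(3)[OF assms] kn]) (use sp in \<open>simp add: spectral_def\<close>)

lemma kyfan_trace: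
  assumes H: "H \<in> carrier_mat n n" and sp: "spectral n H u \<mu>" and v: "orthonormal n n v"
  shows "(\<Sum>j<n. Re (qf n H (v j))) = (\<Sum>j<n. \<mu> j)"
proof -
  have t1: "(\<Sum>j<n. (cmod (ip n (u l) (v j)))^2) = 1" if "l < n" for l
  proof -
    have a: "\<forall>l<n. (\<Sum>j<n. (cmod (ip n (u l) (v j)))^2) \<le> 1" using kyfan_t(2)[OF H sp v order.refl] by auto
    have "(\<Sum>l<n. (\<Sum>j<n. (cmod (ip n (u l) (v j)))^2)) = real n" using kyfan_t(3)[OF H sp v order.refl] .
    then have "(\<Sum>l<n. 1 - (\<Sum>j<n. (cmod (ip n (u l) (v j)))^2)) = 0" by (simp add: sum_subtractf)
    then have "\<forall>l\<in>{..<n}. 1 - (\<Sum>j<n. (cmod (ip n (u l) (v j)))^2) = 0"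
      by (subst sum_nonneg_eq_0_iff[symmetric]) (use a in auto)
    then show ?thesis using that by auto
  qed
  show ?thesis unfolding kyfan_t(1)[OF H sp v order.refl] using t1 by simp
qed

lemma abel_step:
  fixes c d :: "nat \<Rightarrow> real"
  assumes mono: "\<forall>i j. i \<le> j \<and> j < n \<longrightarrow> c j \<le> c i" and P: "\<forall>k\<le>n. (\<Sum>j<k. d j) \<le> 0"
  shows "Suc N \<le> n \<Longrightarrow> (\<Sum>j<Suc N. c j * d j) \<le> c N * (\<Sum>j<Suc N. d j)"
proof (induction N)
  case 0 then show ?case by simp
next
  case (Suc N)
  have IH: "(\<Sum>j<Suc N. c j * d j) \<le> c N * (\<Sum>j<Suc N. d j)" using Suc by simp
  have c: "c (Suc N) \<le> c N" using mono Suc.prems by auto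
  have p: "(\<Sum>j<Suc N. d j) \<le> 0" using P[rule_format, of "Suc N"] Suc.prems by simp
  have "(c N - c (Suc N)) * (\<Sum>j<Suc N. d j) \<le> 0" using c p by (simp add: mult_nonneg_nonpos)
  then show ?case using IH by (simp add: algebra_simps)
qed

lemma abel:
  fixes a b c :: "nat \<Rightarrow> real"
  assumes mono: "\<forall>i j. i \<le> j \<and> j < n \<longrightarrow> c j \<le> c i"
    and part: "\<forall>k\<le>n. (\<Sum>j<k. a j) \<le> (\<Sum>j<k. b j)" and tot: "(\<Sum>j<n. a j) = (\<Sum>j<n. b j)"
  shows "(\<Sum>j<n. c j * a j) \<le> (\<Sum>j<n. c j * b j)"
proof (cases n)
  case 0 then show ?thesis by simp
next
  case (Suc N)
  have P: "\<forall>k\<le>n. (\<Sum>j<k. a j - b j) \<le> 0" using part by (simp add: sum_subtractf)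
  have "(\<Sum>j<Suc N. c j * (a j - b j)) \<le> c N * (\<Sum>j<Suc N. a j - b j)"
    using abel_step[OF mono P] Suc by simp
  also have "(\<Sum>j<Suc N. a j - b j) = 0" using tot Suc by (simp add: sum_subtractf)
  finally show ?thesis using Suc by (simp add: right_diff_distrib sum_subtractf)
qed


abbreviation ee :: "real \<Rightarrow> complex" where "ee \<theta> \<equiv> exp (\<i> * complex_of_real \<theta>)"

lemma cnj_ee: "cnj (ee \<theta>) = exp (- (\<i> * complex_of_real \<theta>))"
  by (simp add: exp_cnj)

lemma cmod_ee: "cmod (ee \<theta>) = 1"
  by (simp add: norm_exp_eq_Re)

lemma herm_part_carrier: "A \<in> carrier_mat n n \<Longrightarrow> herm_part \<theta> A \<in> carrier_mat n n"
  unfolding herm_part_def mat_adjoint_def by auto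

lemma mat_adjoint_index: "A \<in> carrier_mat n n \<Longrightarrow> i < n \<Longrightarrow> k < n \<Longrightarrow> mat_adjoint A $$ (i,k) = cnj (A $$ (k,i))"
  unfolding mat_adjoint_def by (simp add: mat_of_rows_index)

lemma herm_part_index:
  assumes A: "A \<in> carrier_mat n n" and i: "i < n" and k: "k < n"
  shows "herm_part \<theta> A $$ (i,k) = (1/2) * (ee \<theta> * A $$ (i,k) + cnj (ee \<theta>) * cnj (A $$ (k,i)))"
proof -
  have ad: "mat_adjoint A \<in> carrier_mat n n" using A unfolding mat_adjoint_def by auto
  show ?thesis unfolding herm_part_def cnj_ee using A ad i k by (simp add: mat_adjoint_index[OF A i k])
qed

lemma herm_part_hermitian:
  assumes A: "A \<in> carrier_mat n n"
  shows "hermitian n (herm_part \<theta> A)"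
  unfolding hermitian_def
proof (intro allI impI)
  fix i k assume i: "i < n" and k: "k < n"
  show "herm_part \<theta> A $$ (k,i) = cnj (herm_part \<theta> A $$ (i,k))"
    unfolding herm_part_index[OF A i k] herm_part_index[OF A k i] by (simp add: algebra_simps)
qed

lemma qf_expand: "qf n H x = (\<Sum>i<n. \<Sum>k<n. cnj (x i) * H $$ (i,k) * x k)"
  unfolding qf_def ip_def mv_def by (simp add: sum_distrib_left mult.assoc)

lemma sum2_lin: "(\<Sum>i\<in>I. \<Sum>k\<in>I. c * (a * f i k + b * g i k)) = c * (a * (\<Sum>i\<in>I. \<Sum>k\<in>I. f i k) + b * (\<Sum>i\<in>I. \<Sum>k\<in>I. (g i k :: complex)))"
  by (simp add: sum.distrib sum_distrib_left distrib_left)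

lemma qf_herm_part:
  assumes A: "A \<in> carrier_mat n n"
  shows "qf n (herm_part \<theta> A) x = complex_of_real (Re (ee \<theta> * qf n A x))"
proof -
  define S1 where "S1 = (\<Sum>i<n. \<Sum>k<n. cnj (x i) * A $$ (i,k) * x k)"
  define S2 where "S2 = (\<Sum>i<n. \<Sum>k<n. cnj (x i) * cnj (A $$ (k,i)) * x k)"
  have S2: "S2 = cnj S1"
  proof -
    have "cnj S1 = (\<Sum>i<n. \<Sum>k<n. x i * cnj (A $$ (i,k)) * cnj (x k))" unfolding S1_def by simp
    also have "\<dots> = (\<Sum>k<n. \<Sum>i<n. x i * cnj (A $$ (i,k)) * cnj (x k))" by (rule sum.swap)
    also have "\<dots> = S2" unfolding S2_def by (simp add: mult_ac)
    finally show ?thesis by simp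
  qed
  have "qf n (herm_part \<theta> A) x = (\<Sum>i<n. \<Sum>k<n. (1/2) * (ee \<theta> * (cnj (x i) * A $$ (i,k) * x k) + cnj (ee \<theta>) * (cnj (x i) * cnj (A $$ (k,i)) * x k)))"
    unfolding qf_expand by (intro sum.cong refl) (simp add: herm_part_index[OF A] algebra_simps)
  also have "\<dots> = (1/2) * (ee \<theta> * S1 + cnj (ee \<theta>) * S2)"
    unfolding S1_def S2_def by (rule sum2_lin)
  also have "\<dots> = (1/2) * (ee \<theta> * S1 + cnj (ee \<theta> * S1))" unfolding S2 by simp
  also have "\<dots> = complex_of_real (Re (ee \<theta> * S1))" by (subst complex_add_cnj) simp
  finally show ?thesis unfolding S1_def qf_expand .
qed

lemma herm_part_eq: "ee \<phi> = ee \<psi> \<Longrightarrow> herm_part \<phi> A = herm_part \<psi> A"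
  unfolding herm_part_def by (simp add: exp_minus)

lemma qf_eigvec:
  assumes H: "H \<in> carrier_mat n n" and sp: "spectral n H u \<mu>" and j: "j < n"
  shows "Re (qf n H (u j)) = \<mu> j"
proof -
  have o: "orthonormal n n u" using sp unfolding spectral_def by auto
  have "Re (qf n H (u j)) = (\<Sum>l<n. \<mu> l * (cmod (ip n (u l) (u j)))^2)" unfolding qf_spectral[OF H sp] by simp
  also have "\<dots> = (\<Sum>l<n. \<mu> l * (if l = j then 1 else 0))"
    using o j unfolding orthonormal_def by (intro sum.cong refl) auto
  also have "\<dots> = \<mu> j" using j by (simp add: if_distrib cong: if_cong)
  finally show ?thesis .
qed

lemma herm_spectral:
  assumes A: "A \<in> carrier_mat n n"
  obtains u \<mu> where "spectral n (herm_part \<theta> A) u \<mu>" "\<forall>j<n. herm_eigs (herm_part \<theta> A) ! j = \<mu> j"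
  using spectral_exists[OF herm_part_carrier[OF A] herm_part_hermitian[OF A]]
    herm_eigs_nth[OF herm_part_carrier[OF A]] by metis

lemma KF_weighted:
  assumes A: "A \<in> carrier_mat n n" and v: "orthonormal n n v"
    and mono: "\<forall>i j. i \<le> j \<and> j < n \<longrightarrow> c j \<le> c i"
  shows "(\<Sum>j<n. c j * Re (ee \<phi> * qf n A (v j))) \<le> (\<Sum>j<n. c j * herm_eigs (herm_part \<phi> A) ! j)"
proof -
  obtain u \<mu> where sp: "spectral n (herm_part \<phi> A) u \<mu>" and ev: "\<forall>j<n. herm_eigs (herm_part \<phi> A) ! j = \<mu> j"
    using herm_spectral[OF A] by metis
  have H: "herm_part \<phi> A \<in> carrier_mat n n" by (rule herm_part_carrier[OF A])
  have q: "Re (ee \<phi> * qf n A (v j)) = Re (qf n (herm_part \<phi> A) (v j))" for j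
    unfolding qf_herm_part[OF A] by simp
  have "(\<Sum>j<n. c j * Re (qf n (herm_part \<phi> A) (v j))) \<le> (\<Sum>j<n. c j * \<mu> j)"
    by (rule abel[OF mono]) (use kyfan[OF H sp v] kyfan_trace[OF H sp v] in auto)
  then show ?thesis unfolding q using ev by simp
qed

lemma qf_bound:
  assumes A: "A \<in> carrier_mat n n" and x: "ip n x x = 1"
  shows "cmod (qf n A x) \<le> (\<Sum>i<n. \<Sum>k<n. cmod (A $$ (i,k)))"
proof -
  have xi: "cmod (x i) \<le> 1" if "i < n" for i
  proof -
    have "(cmod (x i))^2 \<le> (\<Sum>j<n. (cmod (x j))^2)"
      by (rule member_le_sum) (use that in auto)
    also have "\<dots> = 1" using ip_self_Re[of n x] x by simp
    finally show ?thesis by (simp add: power_le_one_iff)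
  qed
  have "cmod (qf n A x) \<le> (\<Sum>i<n. cmod (\<Sum>k<n. cnj (x i) * A $$ (i,k) * x k))"
    unfolding qf_expand by (rule norm_sum)
  also have "\<dots> \<le> (\<Sum>i<n. \<Sum>k<n. cmod (cnj (x i) * A $$ (i,k) * x k))"
    by (intro sum_mono norm_sum)
  also have "\<dots> \<le> (\<Sum>i<n. \<Sum>k<n. cmod (A $$ (i,k)))"
  proof (intro sum_mono)
    fix i k assume "i \<in> {..<n}" "k \<in> {..<n}"
    then have "cmod (x i) \<le> 1" "cmod (x k) \<le> 1" using xi by auto
    then have "cmod (x i) * cmod (x k) \<le> 1" by (intro mult_le_one) auto
    then have "cmod (A $$ (i,k)) * (cmod (x i) * cmod (x k)) \<le> cmod (A $$ (i,k))" by (rule mult_left_le) simp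
    then show "cmod (cnj (x i) * A $$ (i,k) * x k) \<le> cmod (A $$ (i,k))"
      by (simp add: norm_mult mult_ac)
  qed
  finally show ?thesis .
qed

definition Sk :: "complex mat \<Rightarrow> nat \<Rightarrow> real \<Rightarrow> real" where
  "Sk A k \<phi> = (\<Sum>j<k. herm_eigs (herm_part \<phi> A) ! j)"

lemma Sk_lip1:
  assumes A: "A \<in> carrier_mat n n" and kn: "k \<le> n"
  shows "Sk A k \<psi> - Sk A k \<phi> \<le> real k * (\<Sum>i<n. \<Sum>l<n. cmod (A $$ (i,l))) * cmod (ee \<psi> - ee \<phi>)"
proof -
  define M where "M = (\<Sum>i<n. \<Sum>l<n. cmod (A $$ (i,l)))"
  obtain u \<mu> where sp: "spectral n (herm_part \<psi> A) u \<mu>" and ev: "\<forall>j<n. herm_eigs (herm_part \<psi> A) ! j = \<mu> j"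
    using herm_spectral[OF A] by metis
  obtain u' \<mu>' where sp': "spectral n (herm_part \<phi> A) u' \<mu>'" and ev': "\<forall>j<n. herm_eigs (herm_part \<phi> A) ! j = \<mu>' j"
    using herm_spectral[OF A] by metis
  have o: "orthonormal n n u" using sp unfolding spectral_def by auto
  have H: "herm_part \<psi> A \<in> carrier_mat n n" and H': "herm_part \<phi> A \<in> carrier_mat n n"
    using herm_part_carrier[OF A] by auto
  have "Sk A k \<psi> = (\<Sum>j<k. Re (ee \<psi> * qf n A (u j)))"
    unfolding Sk_def using ev kn qf_eigvec[OF H sp] qf_herm_part[OF A, of \<psi>] by (intro sum.cong refl) auto
  moreover have "(\<Sum>j<k. Re (ee \<phi> * qf n A (u j))) \<le> Sk A k \<phi>"
  proof -
    have "(\<Sum>j<k. Re (ee \<phi> * qf n A (u j))) = (\<Sum>j<k. Re (qf n (herm_part \<phi> A) (u j)))"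
      unfolding qf_herm_part[OF A] by simp
    also have "\<dots> \<le> (\<Sum>j<k. \<mu>' j)" by (rule kyfan[OF H' sp' o kn])
    also have "\<dots> = Sk A k \<phi>" unfolding Sk_def using ev' kn by simp
    finally show ?thesis .
  qed
  moreover have "(\<Sum>j<k. Re (ee \<psi> * qf n A (u j))) - (\<Sum>j<k. Re (ee \<phi> * qf n A (u j))) \<le> (\<Sum>j<k. M * cmod (ee \<psi> - ee \<phi>))"
  proof -
    have "(\<Sum>j<k. Re (ee \<psi> * qf n A (u j))) - (\<Sum>j<k. Re (ee \<phi> * qf n A (u j))) = (\<Sum>j<k. Re ((ee \<psi> - ee \<phi>) * qf n A (u j)))"
      by (simp add: sum_subtractf left_diff_distrib)
    also have "\<dots> \<le> (\<Sum>j<k. M * cmod (ee \<psi> - ee \<phi>))"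
    proof (rule sum_mono)
      fix j assume "j \<in> {..<k}"
      then have "ip n (u j) (u j) = 1" using o kn unfolding orthonormal_def by auto
      then have b: "cmod (qf n A (u j)) \<le> M" unfolding M_def by (rule qf_bound[OF A])
      have "Re ((ee \<psi> - ee \<phi>) * qf n A (u j)) \<le> cmod ((ee \<psi> - ee \<phi>) * qf n A (u j))" by (rule complex_Re_le_cmod)
      also have "\<dots> = cmod (ee \<psi> - ee \<phi>) * cmod (qf n A (u j))" by (rule norm_mult)
      also have "\<dots> \<le> cmod (ee \<psi> - ee \<phi>) * M" by (rule mult_left_mono[OF b]) simp
      finally show "Re ((ee \<psi> - ee \<phi>) * qf n A (u j)) \<le> M * cmod (ee \<psi> - ee \<phi>)" by (simp add: mult.commute)
    qed
    finally show ?thesis .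
  qed
  ultimately show ?thesis unfolding M_def by simp
qed

lemma Sk_lip:
  assumes A: "A \<in> carrier_mat n n" and kn: "k \<le> n"
  shows "\<bar>Sk A k \<psi> - Sk A k \<phi>\<bar> \<le> real k * (\<Sum>i<n. \<Sum>l<n. cmod (A $$ (i,l))) * cmod (ee \<psi> - ee \<phi>)"
  using Sk_lip1[OF A kn, of \<psi> \<phi>] Sk_lip1[OF A kn, of \<phi> \<psi>] norm_minus_commute[of "ee \<psi>" "ee \<phi>"]
  by (simp add: abs_le_iff)


definition FF :: "nat \<Rightarrow> complex mat \<Rightarrow> (nat \<Rightarrow> real) \<Rightarrow> real \<Rightarrow> real" where
  "FF n A c \<phi> = (\<Sum>j<n. c j * herm_eigs (herm_part \<phi> A) ! j)"

lemma ee_reduce: "\<exists>\<phi>'. 0 \<le> \<phi>' \<and> \<phi>' < 2 * pi \<and> ee \<phi>' = ee \<phi>"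
proof -
  define k where "k = \<lfloor>\<phi> / (2 * pi)\<rfloor>"
  define \<phi>' where "\<phi>' = \<phi> - 2 * pi * of_int k"
  have k1: "of_int k \<le> \<phi> / (2 * pi)" and k2: "\<phi> / (2 * pi) < of_int k + 1" unfolding k_def by linarith+
  have pi: "0 < 2 * pi" by simp
  have "2 * pi * of_int k \<le> \<phi>" using k1 pi by (simp add: field_simps)
  moreover have "\<phi> < 2 * pi * of_int k + 2 * pi" using k2 pi by (simp add: field_simps)
  ultimately have b: "0 \<le> \<phi>'" "\<phi>' < 2 * pi" unfolding \<phi>'_def by auto
  have "\<i> * complex_of_real \<phi>' = \<i> * complex_of_real \<phi> - (2 * complex_of_int k * pi) * \<i>"
    unfolding \<phi>'_def by (simp add: algebra_simps)
  then have "ee \<phi>' = ee \<phi> / exp ((2 * complex_of_int k * pi) * \<i>)" by (simp add: exp_diff)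
  also have "exp ((2 * complex_of_int k * pi) * \<i>) = 1" using exp_integer_2pi[of "real_of_int k"] by simp
  finally show ?thesis using b by auto
qed

lemma wnr_le:
  assumes A: "A \<in> carrier_mat n n" and v: "v \<in> wnr A c"
  shows "Re (ee \<phi> * v) \<le> FF n A c \<phi>"
proof -
  obtain \<phi>' where p: "0 \<le> \<phi>'" "\<phi>' < 2 * pi" "ee \<phi>' = ee \<phi>" using ee_reduce by blast
  have "Re (ee \<phi>' * v) \<le> FF n A c \<phi>'" using v p(1,2) A unfolding wnr_def FF_def by auto
  moreover have "FF n A c \<phi>' = FF n A c \<phi>" unfolding FF_def using herm_part_eq[OF p(3)] by simp
  ultimately show ?thesis using p(3) by simp
qed

lemma wnr_memI:
  assumes A: "A \<in> carrier_mat n n" and le: "\<And>\<phi>. 0 \<le> \<phi> \<Longrightarrow> \<phi> < 2 * pi \<Longrightarrow> Re (ee \<phi> * v) \<le> FF n A c \<phi>"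
  shows "v \<in> wnr A c"
  using le A unfolding wnr_def FF_def by auto

lemma closed_wnr: "closed (wnr A c)"
  unfolding wnr_def
  by (intro closed_INT ballI closed_Collect_le continuous_intros)

lemma isCont_lip:
  fixes f :: "real \<Rightarrow> real"
  assumes "\<And>\<psi>. \<bar>f \<psi> - f \<phi>\<bar> \<le> K * cmod (ee \<psi> - ee \<phi>)"
  shows "isCont f \<phi>"
proof -
  have "((\<lambda>\<psi>. K * cmod (ee \<psi> - ee \<phi>)) \<longlongrightarrow> K * cmod (ee \<phi> - ee \<phi>)) (at \<phi>)"
    by (intro tendsto_intros)
  then have g: "((\<lambda>\<psi>. K * cmod (ee \<psi> - ee \<phi>)) \<longlongrightarrow> 0) (at \<phi>)" by simp
  have "((\<lambda>\<psi>. f \<psi> - f \<phi>) \<longlongrightarrow> 0) (at \<phi>)"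
    by (rule Lim_null_comparison[OF _ g]) (use assms in auto)
  then show ?thesis unfolding isCont_def by (rule LIM_zero_cancel)
qed

lemma isCont_Sk:
  assumes A: "A \<in> carrier_mat n n" and kn: "k \<le> n"
  shows "isCont (Sk A k) \<phi>"
  by (rule isCont_lip) (rule Sk_lip[OF A kn])

lemma FF_Sk: "FF n A c \<phi> = (\<Sum>j<n. c j * (Sk A (Suc j) \<phi> - Sk A j \<phi>))"
  unfolding FF_def Sk_def by simp

lemma isCont_FF:
  assumes A: "A \<in> carrier_mat n n"
  shows "isCont (FF n A c) \<phi>"
proof -
  have "isCont (\<lambda>\<phi>. \<Sum>j<n. c j * (Sk A (Suc j) \<phi> - Sk A j \<phi>)) \<phi>"
    by (intro isCont_sum ballI isCont_mult isCont_diff continuous_const isCont_Sk[OF A]) auto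
  then show ?thesis unfolding FF_Sk[abs_def] .
qed

lemma unit_perp:
  fixes a b d :: complex
  assumes a: "cmod a = 1" and b: "cmod b = 1" and d: "d \<noteq> 0" and ra: "Re (a * d) = 0" and rb: "Re (b * d) = 0"
  shows "b = a \<or> b = - a"
proof -
  define z where "z = b * cnj a"
  have aa: "cnj a * a = 1" using a by (metis cnj_mult_self of_real_1 one_power2)
  have bz: "b = z * a" unfolding z_def using aa by (simp add: mult.assoc)
  define s where "s = Im (a * d)"
  have ad: "a * d = \<i> * of_real s" using ra unfolding s_def by (simp add: complex_eq_iff)
  have "a \<noteq> 0" using a by auto
  then have "a * d \<noteq> 0" using d by simp
  then have s0: "s \<noteq> 0" using ad by auto
  have "b * d = z * (\<i> * of_real s)" unfolding bz ad[symmetric] by (simp add: mult.assoc)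
  then have "Re (z * (\<i> * of_real s)) = 0" using rb by simp
  then have "Im z * s = 0" by simp
  then have iz: "Im z = 0" using s0 by simp
  have "cmod z = 1" unfolding z_def using a b by (simp add: norm_mult)
  then have "\<bar>Re z\<bar> = 1" using iz by (simp add: cmod_def)
  then have "z = 1 \<or> z = -1" using iz by (auto simp: complex_eq_iff abs_if split: if_splits)
  then show ?thesis using bz by auto
qed


theorem lemma3:
  fixes A :: "complex mat" and c :: "nat \<Rightarrow> real" and n :: nat and \<theta> h :: real
  assumes A: "A \<in> carrier_mat n n"
    and nonempty: "wnr A c \<noteq> {}"
    and supp: "wnr A c \<subseteq> {v. Re (exp (\<i> * complex_of_real \<theta>) * v) \<le> h}"
    and touch: "{v. Re (exp (\<i> * complex_of_real \<theta>) * v) = h} \<inter> wnr A c \<noteq> {}"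
    and cases: "(interior (wnr A c) \<noteq> {} \<and>
                 (\<exists>p \<in> {v. Re (exp (\<i> * complex_of_real \<theta>) * v) = h} \<inter> frontier (wnr A c).
                    boundary_differentiable_at (wnr A c) p))
              \<or> (\<forall>i j. i \<le> j \<and> j < n \<longrightarrow> c j \<le> c i)"
  shows "h = (\<Sum>j<n. c j * herm_eigs (herm_part \<theta> A) ! j)"
proof -
  let ?W = "wnr A c"
  have goal_eq: "(\<Sum>j<n. c j * herm_eigs (herm_part \<theta> A) ! j) = FF n A c \<theta>" unfolding FF_def ..
  obtain v0 where v0: "v0 \<in> ?W" "Re (ee \<theta> * v0) = h" using touch by blast
  have h_le: "h \<le> FF n A c \<theta>" using wnr_le[OF A v0(1), of \<theta>] v0(2) by simp
  from assms(5) show ?thesis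
  proof
    assume ca: "interior ?W \<noteq> {} \<and> (\<exists>p \<in> {v. Re (ee \<theta> * v) = h} \<inter> frontier ?W. boundary_differentiable_at ?W p)"
    then have intW: "interior ?W \<noteq> {}" by blast
    from ca obtain p where p: "Re (ee \<theta> * p) = h" "p \<in> frontier ?W" "boundary_differentiable_at ?W p" by blast
    have clW: "closure ?W = ?W" using closed_wnr closure_closed by blast
    have frW: "frontier ?W \<subseteq> ?W" using clW unfolding frontier_def by blast
    have pW: "p \<in> ?W" using p(2) frW by blast
    have "\<exists>\<phi>\<in>{0..2*pi}. Re (ee \<phi> * p) = FF n A c \<phi>"
    proof (rule ccontr)
      assume nt: "\<not> (\<exists>\<phi>\<in>{0..2*pi}. Re (ee \<phi> * p) = FF n A c \<phi>)"
      have lt: "Re (ee \<phi> * p) < FF n A c \<phi>" if "\<phi> \<in> {0..2*pi}" for \<phi>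
        using nt that wnr_le[OF A pW, of \<phi>] by force
      define g where "g \<phi> = FF n A c \<phi> - Re (ee \<phi> * p)" for \<phi>
      have cR: "isCont (\<lambda>x. Re (ee x * p)) x" for x
        unfolding isCont_def by (intro tendsto_intros)
      have "continuous_on {0..2*pi} g" unfolding g_def
        by (intro continuous_at_imp_continuous_on ballI isCont_diff isCont_FF[OF A] cR)
      then obtain \<phi>0 where \<phi>0: "\<phi>0 \<in> {0..2*pi}" "\<forall>\<phi>\<in>{0..2*pi}. g \<phi>0 \<le> g \<phi>"
        using continuous_attains_inf[of "{0..2*pi}" g] by auto
      define \<delta> where "\<delta> = g \<phi>0"
      have \<delta>0: "\<delta> > 0" using lt[OF \<phi>0(1)] unfolding \<delta>_def g_def by simp
      have "ball p \<delta> \<subseteq> ?W"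
      proof
        fix v assume "v \<in> ball p \<delta>"
        then have dv: "cmod (v - p) < \<delta>" by (simp add: dist_norm norm_minus_commute)
        show "v \<in> ?W"
        proof (rule wnr_memI[OF A])
          fix \<phi> :: real assume "0 \<le> \<phi>" "\<phi> < 2*pi"
          then have \<phi>: "\<phi> \<in> {0..2*pi}" by simp
          have "Re (ee \<phi> * v) = Re (ee \<phi> * p) + Re (ee \<phi> * (v - p))" by (simp add: algebra_simps)
          also have "Re (ee \<phi> * (v - p)) \<le> cmod (ee \<phi> * (v - p))" by (rule complex_Re_le_cmod)
          also have "cmod (ee \<phi> * (v - p)) = cmod (v - p)" by (simp add: norm_mult cmod_ee)
          finally have "Re (ee \<phi> * v) < Re (ee \<phi> * p) + \<delta>" using dv by simp
          also have "\<delta> \<le> g \<phi>" using \<phi>0(2) \<phi> unfolding \<delta>_def by simp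
          finally show "Re (ee \<phi> * v) \<le> FF n A c \<phi>" unfolding g_def by simp
        qed
      qed
      then have "p \<in> interior ?W" using \<delta>0 mem_interior by blast
      then show False using p(2) unfolding frontier_def by simp
    qed
    then obtain \<phi> where \<phi>: "Re (ee \<phi> * p) = FF n A c \<phi>" by blast
    obtain \<gamma> :: "real \<Rightarrow> complex" and e0 U d where \<gamma>: "0 < e0" "open U" "p \<in> U"
      "continuous_on {-e0<..<e0} \<gamma>" "inj_on \<gamma> {-e0<..<e0}" "\<gamma> ` {-e0<..<e0} = frontier ?W \<inter> U"
      "\<gamma> 0 = p" "(\<gamma> has_vector_derivative d) (at 0)" "d \<noteq> 0"
      using p(3) unfolding boundary_differentiable_at_def by blast
    have \<gamma>W: "\<gamma> t \<in> ?W" if "\<bar>0 - t\<bar> < e0" for t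
    proof -
      have "t \<in> {-e0<..<e0}" using that by auto
      then have "\<gamma> t \<in> frontier ?W" using \<gamma>(6) by blast
      then show ?thesis using frW by blast
    qed
    have deriv0: "Re (b * d) = 0" if le: "\<forall>t. \<bar>0 - t\<bar> < e0 \<longrightarrow> Re (b * \<gamma> t) \<le> Re (b * \<gamma> 0)" for b
    proof -
      have "((\<lambda>t. Re (b * \<gamma> t)) has_vector_derivative Re (b * d)) (at 0)"
        by (rule bounded_linear.has_vector_derivative[OF bounded_linear_Re has_vector_derivative_mult_right[OF \<gamma>(8)]])
      then have "DERIV (\<lambda>t. Re (b * \<gamma> t)) 0 :> Re (b * d)" by (simp add: has_real_derivative_iff_has_vector_derivative)
      then show ?thesis using DERIV_local_max \<gamma>(1) le by blast
    qed
    have d\<phi>: "Re (ee \<phi> * d) = 0"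
      by (rule deriv0) (use \<gamma>W wnr_le[OF A] \<phi> \<gamma>(7) in auto)
    have d\<theta>: "Re (ee \<theta> * d) = 0"
      by (rule deriv0) (use \<gamma>W supp p(1) \<gamma>(7) in auto)
    from unit_perp[OF cmod_ee cmod_ee \<gamma>(9) d\<theta> d\<phi>] have "ee \<phi> = ee \<theta> \<or> ee \<phi> = - ee \<theta>" .
    then show ?thesis
    proof
      assume e: "ee \<phi> = ee \<theta>"
      then have "FF n A c \<phi> = FF n A c \<theta>" unfolding FF_def using herm_part_eq[OF e] by simp
      then show ?thesis using \<phi> p(1) e goal_eq by simp
    next
      assume e: "ee \<phi> = - ee \<theta>"
      have onL: "Re (ee \<theta> * v) = h" if "v \<in> ?W" for v
      proof -
        have "Re (ee \<phi> * v) \<le> Re (ee \<phi> * p)" using wnr_le[OF A that, of \<phi>] \<phi> by simp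
        then have "h \<le> Re (ee \<theta> * v)" using e p(1) by simp
        moreover have "Re (ee \<theta> * v) \<le> h" using supp that by auto
        ultimately show ?thesis by simp
      qed
      obtain v1 where v1: "v1 \<in> interior ?W" using intW by blast
      then obtain r where r: "r > 0" "ball v1 r \<subseteq> ?W" using mem_interior by blast
      have v1W: "v1 \<in> ?W" using v1 interior_subset by blast
      define v2 where "v2 = v1 + of_real (r/2) * cnj (ee \<theta>)"
      have "dist v1 v2 = r / 2" unfolding v2_def using r(1) by (simp add: dist_norm norm_mult cmod_ee)
      then have "v2 \<in> ball v1 r" using r(1) by simp
      then have "v2 \<in> ?W" using r(2) by blast
      then have "Re (ee \<theta> * v2) = h" by (rule onL)
      moreover have "ee \<theta> * cnj (ee \<theta>) = 1"
        using cmod_ee[of \<theta>] by (metis cnj_mult_self mult.commute of_real_1 one_power2)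
      then have "Re (ee \<theta> * v2) = Re (ee \<theta> * v1) + r/2"
        unfolding v2_def by (simp add: algebra_simps)
      moreover have "Re (ee \<theta> * v1) = h" by (rule onL[OF v1W])
      ultimately show ?thesis using r(1) by simp
    qed
  next
    assume cb: "\<forall>i j. i \<le> j \<and> j < n \<longrightarrow> c j \<le> c i"
    obtain u \<mu> where sp: "spectral n (herm_part \<theta> A) u \<mu>" and ev: "\<forall>j<n. herm_eigs (herm_part \<theta> A) ! j = \<mu> j"
      using herm_spectral[OF A] by metis
    have o: "orthonormal n n u" using sp unfolding spectral_def by auto
    define w where "w = (\<Sum>j<n. complex_of_real (c j) * qf n A (u j))"
    have reW: "Re (ee \<phi> * w) = (\<Sum>j<n. c j * Re (ee \<phi> * qf n A (u j)))" for \<phi>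
    proof -
      have "ee \<phi> * w = (\<Sum>j<n. complex_of_real (c j) * (ee \<phi> * qf n A (u j)))"
        unfolding w_def by (simp add: sum_distrib_left mult.left_commute)
      then show ?thesis by (simp add: Re_sum)
    qed
    have "w \<in> ?W"
    proof (rule wnr_memI[OF A])
      fix \<phi> :: real
      show "Re (ee \<phi> * w) \<le> FF n A c \<phi>" unfolding reW FF_def by (rule KF_weighted[OF A o cb])
    qed
    then have "Re (ee \<theta> * w) \<le> h" using supp by auto
    moreover have "Re (ee \<theta> * w) = FF n A c \<theta>"
    proof -
      have q: "Re (ee \<theta> * qf n A (u j)) = \<mu> j" if "j < n" for j
        using qf_eigvec[OF herm_part_carrier[OF A] sp that] qf_herm_part[OF A, of \<theta> "u j"] by simp
      show ?thesis unfolding reW FF_def using ev q by simp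
    qed
    ultimately show ?thesis using h_le goal_eq by simp
  qed
qed


end
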